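(* Let $\mathcal{P}$ be a locally finite poset and let $J$ and $\mu$ be as in the context. Then for every $(x,y,z)\in \mathcal{F}l^3(\mathcal{P})$ we have $$J(x,y,z)=\mu(x,y)\,\mu(y,z).$$
   Context: For a locally finite poset $\mathcal{P}$, let $\mathcal{F}l^2(\mathcal{P})=\{(x,y)\in\mathcal{P}^2: x\le y\}$ and $\mathcal{F}l^3(\mathcal{P})=\{(x,y,z)\in\mathcal{P}^3: x\le y\le z\}$. The Möbius function $\mu:\mathcal{F}l^2(\mathcal{P})\to\mathbb{Z}$ is defined by $\mu(x,x)=1$ and $\sum_{x\le a\le y}\mu(x,a)=0$ for $x<y$. Let $\delta_3(x,y,z)=1$ if $x=y=z$ and $0$ otherwise. The function $J:\mathcal{F}l^3(\mathcal{P})\to\mathbb{Z}$ is the unique function satisfying, for all $(x,y,z)\in\mathcal{F}l^3(\mathcal{P})$, $$\sum_{\substack{a,b\in\mathcal{P}\\ x\le a\le y\le b\le z}} J(a,y,b)=\delta_3(x,y,z).$$ *)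

theory Defs
  imports Main
begin

text \<open>A poset is modelled by a type of class order; local finiteness means every
closed interval is finite.\<close>
definition locally_finite_poset :: "'a::order itself \<Rightarrow> bool" where
  "locally_finite_poset _ \<longleftrightarrow> (\<forall>x y::'a. finite {x..y})"

text \<open>Defining property of the Moebius function on Fl^2 (values off Fl^2 irrelevant).\<close>
definition is_mobius :: "('a::order \<Rightarrow> 'a \<Rightarrow> int) \<Rightarrow> bool" where
  "is_mobius m \<longleftrightarrow> (\<forall>x. m x x = 1) \<and>
     (\<forall>x y. x < y \<longrightarrow> (\<Sum>a\<in>{x..y}. m x a) = 0)"

definition delta3 :: "'a \<Rightarrow> 'a \<Rightarrow> 'a \<Rightarrow> int" where
  "delta3 x y z = (if x = y \<and> y = z then 1 else 0)"

definition is_J :: "('a::order \<Rightarrow> 'a \<Rightarrow> 'a \<Rightarrow> int) \<Rightarrow> bool" where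
  "is_J j \<longleftrightarrow> (\<forall>x y z. x \<le> y \<and> y \<le> z \<longrightarrow>
      (\<Sum>a\<in>{x..y}. \<Sum>b\<in>{y..z}. j a y b) = delta3 x y z)"

end

theory Submission
  imports Defs
begin

lemma right_mobius:
  fixes mu :: "'a::order \<Rightarrow> 'a \<Rightarrow> int"
  assumes lf: "locally_finite_poset TYPE('a)" and mob: "is_mobius mu"
  shows "x \<le> y \<Longrightarrow> (\<Sum>a\<in>{x..y}. mu a y) = (if x = y then 1 else 0)"
proof (induction "card {x..y}" arbitrary: x rule: less_induct)
  case less
  have fin: "\<And>u v::'a. finite {u..v}" using lf unfolding locally_finite_poset_def by blast
  have m1: "\<And>u. mu u u = 1" and m0: "\<And>u v. u < v \<Longrightarrow> (\<Sum>a\<in>{u..v}. mu u a) = 0"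
    using mob unfolding is_mobius_def by auto
  show ?case
  proof (cases "x = y")
    case True then show ?thesis using m1 by simp
  next
    case False
    with less.prems have xy: "x < y" by simp
    let ?R = "\<lambda>b. \<Sum>a\<in>{b..y}. mu a y"
    have IH: "?R b = (if b = y then 1 else 0)" if "b \<in> {x..y} - {x}" for b
    proof -
      have "{b..y} \<subset> {x..y}" using that by auto
      then have "card {b..y} < card {x..y}" using fin by (simp add: psubset_card_mono)
      then show ?thesis using less.hyps that by auto
    qed
    define S where "S = (\<Sum>a\<in>{x..y}. \<Sum>b\<in>{b\<in>{x..y}. b \<le> a}. mu x b * mu a y)"
    have "S = (\<Sum>a\<in>{x..y}. (\<Sum>b\<in>{x..a}. mu x b) * mu a y)"
      unfolding S_def sum_distrib_right
      by (rule sum.cong) (auto intro!: sum.cong)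
    also have "\<dots> = (\<Sum>a\<in>{x..y}. (if a = x then 1 else 0) * mu a y)"
    proof (rule sum.cong)
      fix a assume "a \<in> {x..y}"
      then show "(\<Sum>b\<in>{x..a}. mu x b) * mu a y = (if a = x then 1 else 0) * mu a y"
        using m0[of x a] m1 by (cases "a = x") auto
    qed simp
    also have "\<dots> = (\<Sum>a\<in>{x..y}. (if a = x then mu x y else 0))"
      by (intro sum.cong) auto
    also have "\<dots> = mu x y" using xy fin by (auto simp add: sum.delta)
    finally have S1: "S = mu x y" .
    have "S = (\<Sum>b\<in>{x..y}. \<Sum>a\<in>{a\<in>{x..y}. b \<le> a}. mu x b * mu a y)"
      unfolding S_def by (rule sum.swap_restrict[OF fin fin])
    also have "\<dots> = (\<Sum>b\<in>{x..y}. mu x b * ?R b)"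
      unfolding sum_distrib_left
      by (rule sum.cong) (auto intro!: sum.cong)
    also have "\<dots> = mu x x * ?R x + (\<Sum>b\<in>{x..y} - {x}. mu x b * ?R b)"
      using fin xy by (subst sum.remove[of _ x]) auto
    also have "(\<Sum>b\<in>{x..y} - {x}. mu x b * ?R b) = (\<Sum>b\<in>{x..y} - {x}. mu x b * (if b = y then 1 else 0))"
      using IH by (intro sum.cong) auto
    also have "\<dots> = (\<Sum>b\<in>{x..y} - {x}. (if b = y then mu x y else 0))"
      by (intro sum.cong) auto
    also have "\<dots> = mu x y" using xy fin by (auto simp add: sum.delta)
    finally have "?R x = 0" using S1 m1 by simp
    then show ?thesis using False by simp
  qed
qed

theorem theorem5p2:
  fixes mu :: "'a::order \<Rightarrow> 'a \<Rightarrow> int" and J :: "'a \<Rightarrow> 'a \<Rightarrow> 'a \<Rightarrow> int"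
  assumes "locally_finite_poset TYPE('a)"
    and "is_mobius mu"
    and "is_J J"
    and "x \<le> y" and "y \<le> z"
  shows "J x y z = mu x y * mu y z"
  using assms(4,5)
proof (induction "card {x..y} + card {y..z}" arbitrary: x z rule: less_induct)
  case less
  have fin: "\<And>u v::'a. finite {u..v}" using assms(1) unfolding locally_finite_poset_def by blast
  have m1: "\<And>u. mu u u = 1" and m0: "\<And>u v. u < v \<Longrightarrow> (\<Sum>a\<in>{u..v}. mu u a) = 0"
    using assms(2) unfolding is_mobius_def by auto
  have L: "(\<Sum>b\<in>{y..z}. mu y b) = (if y = z then 1 else 0)"
    using m0[of y z] m1 less.prems by (cases "y = z") auto
  have R: "(\<Sum>a\<in>{x..y}. mu a y) = (if x = y then 1 else 0)"
    using right_mobius[OF assms(1,2) less.prems(1)] .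
  let ?d = "J x y z - mu x y * mu y z"
  have pt: "J a y b = mu a y * mu y b + (if a = x \<and> b = z then ?d else 0)"
    if "a \<in> {x..y}" "b \<in> {y..z}" for a b
  proof (cases "a = x \<and> b = z")
    case True then show ?thesis by simp
  next
    case False
    have s1: "{a..y} \<subseteq> {x..y}" "{y..b} \<subseteq> {y..z}" using that by auto
    have c1: "card {a..y} \<le> card {x..y}" "card {y..b} \<le> card {y..z}"
      using s1 fin by (simp_all add: card_mono)
    have "{a..y} \<subset> {x..y} \<or> {y..b} \<subset> {y..z}"
    proof (cases "a = x")
      case True
      with False have "b \<noteq> z" by simp
      then have "z \<notin> {y..b}" using that by auto
      then show ?thesis using s1 less.prems by auto
    next
      case False
      then have "x \<notin> {a..y}" using that by auto
      then show ?thesis using s1 less.prems by auto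
    qed
    then have "card {a..y} + card {y..b} < card {x..y} + card {y..z}"
      using c1 fin psubset_card_mono by (metis add_le_less_mono add_less_le_mono)
    then have "J a y b = mu a y * mu y b" using less.hyps that by auto
    then show ?thesis using False by auto
  qed
  have "delta3 x y z = (\<Sum>a\<in>{x..y}. \<Sum>b\<in>{y..z}. J a y b)"
    using assms(3) less.prems unfolding is_J_def by auto
  also have "\<dots> = (\<Sum>a\<in>{x..y}. \<Sum>b\<in>{y..z}. mu a y * mu y b + (if a = x \<and> b = z then ?d else 0))"
    using pt by (intro sum.cong) auto
  also have "\<dots> = (\<Sum>a\<in>{x..y}. mu a y) * (\<Sum>b\<in>{y..z}. mu y b)
      + (\<Sum>a\<in>{x..y}. \<Sum>b\<in>{y..z}. (if a = x \<and> b = z then ?d else 0))"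
    by (simp add: sum.distrib sum_product)
  also have "(\<Sum>a\<in>{x..y}. \<Sum>b\<in>{y..z}. (if a = x \<and> b = z then ?d else 0))
      = (\<Sum>a\<in>{x..y}. (if a = x then ?d else 0))"
    using fin less.prems by (intro sum.cong) (auto simp: sum.delta')
  also have "\<dots> = ?d" using fin less.prems by (simp add: sum.delta')
  finally show ?case using L R unfolding delta3_def by (auto split: if_splits)
qed

end
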